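(* Let $\mathbb{F}$ be any field. There exists an infinite sequence $C_1,C_2,C_3,\dots$ of $\mathbb{F}$-linear codes such that, if $C_i$ has parameters $[n_i,k_i,d_i]$, then for every $i\ge 1$ \[ \frac{k_i d_i}{n_i}=2i>\sqrt{k_i}-1>2i-1 . \]
   Context: An $\mathbb{F}$-linear code of length $n$ is an $\mathbb{F}$-subspace $C\le\mathbb{F}^n$. Its parameters $[n,k,d]$ are the length $n$, the dimension $k=\dim_{\mathbb{F}}C$, and the minimum distance $d$. The minimum distance is the minimum Hamming weight of a nonzero codeword, where the weight $\mathrm{wt}(x)$ of $x\in\mathbb{F}^n$ is its number of nonzero coordinates. *)

theory Defs
  imports Complex_Main "HOL-Library.Function_Algebras"
begin

text \<open>Vectors of F^n are represented as functions nat => F vanishing outside {..<n}.\<close>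

definition Fn :: "nat \<Rightarrow> (nat \<Rightarrow> 'a::field) set" where
  "Fn n = {v. \<forall>i\<ge>n. v i = 0}"

definition vscale :: "'a::field \<Rightarrow> (nat \<Rightarrow> 'a) \<Rightarrow> (nat \<Rightarrow> 'a)" where
  "vscale c v = (\<lambda>i. c * v i)"

definition linear_code :: "nat \<Rightarrow> (nat \<Rightarrow> 'a::field) set \<Rightarrow> bool" where
  "linear_code n C \<longleftrightarrow> C \<subseteq> Fn n \<and> ((\<lambda>i. 0) \<in> C) \<and>
     (\<forall>x\<in>C. \<forall>y\<in>C. (\<lambda>i. x i + y i) \<in> C) \<and> (\<forall>c. \<forall>x\<in>C. vscale c x \<in> C)"

definition code_dim :: "(nat \<Rightarrow> 'a::field) set \<Rightarrow> nat" where
  "code_dim C = vector_space.dim vscale C"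

definition wt :: "nat \<Rightarrow> (nat \<Rightarrow> 'a::zero) \<Rightarrow> nat" where
  "wt n x = card {i. i < n \<and> x i \<noteq> 0}"

definition min_dist :: "nat \<Rightarrow> (nat \<Rightarrow> 'a::zero) set \<Rightarrow> nat" where
  "min_dist n C = Min (wt n ` {x\<in>C. \<exists>i<n. x i \<noteq> 0})"

end

theory Submission
  imports Defs
begin

lemma vs: "vector_space (vscale :: 'a::field \<Rightarrow> (nat \<Rightarrow> 'a) \<Rightarrow> _)"
  unfolding vector_space_def module_def vscale_def
  by (auto simp: fun_eq_iff algebra_simps plus_fun_def)

interpretation V: vector_space "vscale :: 'a::field \<Rightarrow> (nat \<Rightarrow> 'a) \<Rightarrow> _"
  by (rule vs)

lemma pow2_pred: "0 < k \<Longrightarrow> (2::nat)^k = 2 * 2^(k-1)"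
  by (cases k) auto

lemma fun_sum_apply: "(sum f A) x = sum (\<lambda>a. f a x) A"
  by (induction A rule: infinite_finite_induct) auto

definition enc :: "nat \<Rightarrow> nat \<Rightarrow> (nat \<Rightarrow> 'a::field) \<Rightarrow> nat \<Rightarrow> 'a" where
 "enc r m x p = (if p < r * 2^m then (\<Sum>j<m. if bit (p div r) j then x (j*r + p mod r) else 0) else 0)"

definition dl :: "nat \<Rightarrow> nat \<Rightarrow> 'a::field" where "dl q i = (if i = q then 1 else 0)"

lemma enc_pq:
  assumes r: "r > 0" and q: "q < m * r"
  shows "enc r m x (r * 2^(q div r) + q mod r) = x q"
proof -
  have j: "q div r < m" using q r by (simp add: less_mult_imp_div_less)
  have c: "q mod r < r" using r by simp
  have "(2::nat)^(q div r) * 2 \<le> 2^m"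
    using j by (metis Suc_leI power_Suc power_increasing_iff mult.commute one_less_numeral_iff semiring_norm(76))
  moreover have "(1::nat) \<le> 2^(q div r)" by simp
  ultimately have "(2::nat)^(q div r) + 1 \<le> 2^m" by linarith
  then have "r * 2^(q div r) + r \<le> r * 2^m" by (metis add_mult_distrib2 mult_le_mono2 nat_mult_1_right)
  then have lt: "r * 2^(q div r) + q mod r < r * 2^m" using c by linarith
  have dv: "(r * 2^(q div r) + q mod r) div r = 2^(q div r)" using r c by simp
  have md: "(r * 2^(q div r) + q mod r) mod r = q mod r" using r by simp
  have "enc r m x (r * 2^(q div r) + q mod r) = x (q div r * r + q mod r)"
    unfolding enc_def using lt dv md j by (simp add: bit_exp_iff)
  then show ?thesis by simp
qed
lemma enc_out: "\<not> p < r*2^m \<Longrightarrow> enc r m x p = 0"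
  by (simp add: enc_def)

lemma enc_Fn: "enc r m x \<in> Fn (r*2^m)"
  by (simp add: Fn_def enc_def)

lemma enc_add: "enc r m (\<lambda>i. x i + y i) = (\<lambda>p. enc r m x p + enc r m y p)"
  by (auto simp: enc_def fun_eq_iff sum.distrib[symmetric] intro!: sum.cong)

lemma enc_scale: "enc r m (vscale c x) = vscale c (enc r m x)"
  by (auto simp: enc_def vscale_def fun_eq_iff sum_distrib_left intro!: sum.cong)

lemma enc_zero: "enc r m (\<lambda>i. 0) = (\<lambda>i. 0)"
  by (auto simp: enc_def fun_eq_iff)

lemma wt_lower:
  assumes r: "r > 0" and m: "m > 0" and q: "q < m*r" "x q \<noteq> 0"
  shows "2^(m-1) \<le> card {p. p < r*2^m \<and> enc r m x p \<noteq> 0}"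
proof -
  define j where "j = q div r"
  define c where "c = q mod r"
  have j: "j < m" using q r by (simp add: j_def less_mult_imp_div_less)
  have c: "c < r" using r by (simp add: c_def)
  have qjc: "q = j*r + c" by (simp add: j_def c_def)
  define \<sigma> where "\<sigma> p = r * (xor (p div r) (2^j)) + c" for p
  define B where "B = {p. p < r*2^m \<and> p mod r = c}"
  define Z where "Z = {p. p < r*2^m \<and> enc r m x p \<noteq> 0}"
  have finZ: "finite Z" unfolding Z_def by simp
  have BI: "B = (\<lambda>u. r*u + c) ` {..<2^m}"
  proof (rule set_eqI, rule iffI)
    fix p assume "p \<in> B"
    then have p: "p < r*2^m" "p mod r = c" by (auto simp: B_def)
    have "p div r < 2^m" using p(1) by (simp add: less_mult_imp_div_less mult.commute)
    moreover have "p = r * (p div r) + c" using p(2) by (metis div_mult_mod_eq mult.commute)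
    ultimately show "p \<in> (\<lambda>u. r*u + c) ` {..<2^m}" by blast
  next
    fix p assume "p \<in> (\<lambda>u. r*u + c) ` {..<2^m}"
    then obtain u where u: "u < 2^m" "p = r*u+c" by auto
    have "r*u + c < r*u + r" using c by simp
    also have "\<dots> = r*(u+1)" by simp
    also have "\<dots> \<le> r*2^m" using u(1) by (intro mult_le_mono2) simp
    finally show "p \<in> B" using u c by (simp add: B_def)
  qed
  have cardB: "card B = 2^m"
    unfolding BI by (subst card_image) (use r in \<open>auto simp: inj_on_def\<close>)
  have key: "\<sigma> p \<in> Z \<and> \<sigma> (\<sigma> p) = p" if pB: "p \<in> B" and pZ: "p \<notin> Z" for p
  proof -
    define u where "u = p div r"
    define u' where "u' = xor u (2^j)"
    have p: "p < r*2^m" "p mod r = c" using pB by (auto simp: B_def)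
    have u: "u < 2^m" using p(1) by (simp add: u_def less_mult_imp_div_less mult.commute)
    have tu: "take_bit m u = u" using u by (simp add: take_bit_nat_eq_self_iff)
    have "take_bit m u' = u'"
      using j by (simp add: u'_def tu)
    then have u': "u' < 2^m" by (simp add: take_bit_nat_eq_self_iff)
    have sp: "\<sigma> p = r*u' + c" by (simp add: \<sigma>_def u_def u'_def)
    have "r*u' + c < r*u' + r" using c by simp
    also have "\<dots> = r*(u'+1)" by simp
    also have "\<dots> \<le> r*2^m" using u' by (intro mult_le_mono2) simp
    finally have splt: "\<sigma> p < r*2^m" using sp by simp
    have spd: "\<sigma> p div r = u'" "\<sigma> p mod r = c" using sp c r by auto
    define S where "S (v::nat) = (\<Sum>j'\<in>{..<m}-{j}. if bit v j' then x (j'*r + c) else 0)" for v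
    have split: "(\<Sum>j'<m. if bit (v::nat) j' then x (j'*r + c) else 0) = (if bit v j then x q else 0) + S v" for v
      unfolding S_def qjc using j by (simp add: sum.remove)
    have SS: "S u' = S u"
      unfolding S_def u'_def by (rule sum.cong) (auto simp: bit_xor_iff bit_exp_iff)
    have bj: "bit u' j = (\<not> bit u j)" by (simp add: u'_def bit_xor_iff bit_exp_iff)
    have e1: "enc r m x p = (if bit u j then x q else 0) + S u"
      unfolding enc_def p(2) u_def[symmetric] using p(1) split by simp
    have e2: "enc r m x (\<sigma> p) = (if bit u' j then x q else 0) + S u'"
      unfolding enc_def spd using splt split by simp
    have "enc r m x p = 0" using pZ p by (simp add: Z_def)
    then have "enc r m x (\<sigma> p) \<noteq> 0" using e1 e2 SS bj q(2) by (cases "bit u j") auto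
    then have sZ: "\<sigma> p \<in> Z" using splt by (simp add: Z_def)
    have "xor u' (2^j) = u" by (rule bit_eqI) (auto simp: u'_def bit_xor_iff)
    then have "\<sigma> (\<sigma> p) = r * u + c" unfolding \<sigma>_def[of "\<sigma> p"] spd(1) by simp
    also have "\<dots> = p" unfolding u_def using p(2) by (metis div_mult_mod_eq mult.commute)
    finally have "\<sigma> (\<sigma> p) = p" .
    then show ?thesis using sZ by simp
  qed
  have "B \<subseteq> Z \<union> \<sigma> ` Z"
  proof
    fix p assume "p \<in> B"
    then show "p \<in> Z \<union> \<sigma> ` Z" using key[of p] by (cases "p \<in> Z") (auto intro: image_eqI[of p \<sigma> "\<sigma> p"])
  qed
  then have "card B \<le> card (Z \<union> \<sigma> ` Z)" using finZ by (intro card_mono) auto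
  also have "\<dots> \<le> card Z + card (\<sigma> ` Z)" by (rule card_Un_le)
  also have "\<dots> \<le> 2 * card Z" using card_image_le[OF finZ, of \<sigma>] by simp
  finally have "2^m \<le> 2 * card Z" using cardB by simp
  moreover have "(2::nat)^m = 2 * 2^(m-1)" by (rule pow2_pred) (use m in simp)
  ultimately show ?thesis by (simp add: Z_def)
qed

lemma dl_Fn: "q < K \<Longrightarrow> dl q \<in> Fn K"
  by (simp add: Fn_def dl_def)

lemma enc_dl_pq:
  assumes r: "r > 0" and q: "q < m*r" and q': "q' < m*r"
  shows "enc r m (dl q') (r * 2^(q div r) + q mod r) = (if q = q' then 1 else 0)"
  using enc_pq[OF r q, of "dl q'"] by (simp add: dl_def)

lemma enc_expand:
  assumes x: "x \<in> Fn (m*r)"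
  shows "enc r m x = sum (\<lambda>q. vscale (x q) (enc r m (dl q))) {..<m*r}"
proof (rule ext)
  fix p
  show "enc r m x p = sum (\<lambda>q. vscale (x q) (enc r m (dl q))) {..<m*r} p"
  proof (cases "p < r*2^m")
    case False then show ?thesis by (simp add: fun_sum_apply vscale_def enc_def)
  next
    case True
    define c where "c = p mod r"
    have "sum (\<lambda>q. vscale (x q) (enc r m (dl q))) {..<m*r} p
       = (\<Sum>q<m*r. x q * (\<Sum>j<m. if bit (p div r) j then dl q (j*r + c) else 0))"
      using True unfolding c_def by (simp add: fun_sum_apply vscale_def enc_def)
    also have "\<dots> = (\<Sum>q<m*r. \<Sum>j<m. if bit (p div r) j then x q * dl q (j*r + c) else 0)"
      by (simp add: sum_distrib_left if_distrib cong: if_cong)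
    also have "\<dots> = (\<Sum>j<m. \<Sum>q<m*r. if bit (p div r) j then x q * dl q (j*r + c) else 0)"
      by (rule sum.swap)
    also have "\<dots> = (\<Sum>j<m. if bit (p div r) j then x (j*r + c) else 0)"
    proof (rule sum.cong[OF refl])
      fix j assume j: "j \<in> {..<m}"
      have "c < r" using True by (cases "r = 0") (auto simp: c_def)
      then have "j*r + c < j*r + r" by simp
      also have "\<dots> = Suc j * r" by simp
      also have "\<dots> \<le> m*r" using j by (intro mult_le_mono1) simp
      finally have lt: "j*r + c < m*r" .
      show "(\<Sum>q<m*r. if bit (p div r) j then x q * dl q (j*r + c) else 0) = (if bit (p div r) j then x (j*r + c) else 0)"
      proof (cases "bit (p div r) j")
        case True
        have "(\<Sum>q<m*r. x q * dl q (j*r + c)) = (\<Sum>q<m*r. if j*r + c = q then x q else 0)"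
          by (rule sum.cong) (auto simp: dl_def)
        also have "\<dots> = x (j*r + c)" using lt by simp
        finally show ?thesis using True by simp
      qed simp
    qed
    also have "\<dots> = enc r m x p" using True unfolding c_def by (simp add: enc_def)
    finally show ?thesis by simp
  qed
qed

lemma code_dim_enc:
  assumes r: "r > 0"
  shows "code_dim (enc r m ` Fn (m*r) :: (nat \<Rightarrow> 'a::field) set) = m*r"
proof -
  define B where "B = (\<lambda>q. enc r m (dl q) :: nat \<Rightarrow> 'a) ` {..<m*r}"
  define P where "P q = r * 2^(q div r) + q mod r" for q
  have inj: "inj_on (\<lambda>q. enc r m (dl q) :: nat \<Rightarrow> 'a) {..<m*r}"
  proof (rule inj_onI)
    fix q q' assume q: "q \<in> {..<m*r}" and q': "q' \<in> {..<m*r}" and e: "(enc r m (dl q) :: nat \<Rightarrow> 'a) = enc r m (dl q')"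
    have "(enc r m (dl q) :: nat \<Rightarrow> 'a) (P q) = 1" using enc_dl_pq[OF r, of q m q] q by (simp add: P_def)
    moreover have "(enc r m (dl q') :: nat \<Rightarrow> 'a) (P q) = (if q = q' then 1 else 0)" using enc_dl_pq[OF r, of q m q'] q q' by (simp add: P_def)
    ultimately show "q = q'" using e by (auto split: if_splits)
  qed
  have cardB: "card B = m*r" unfolding B_def by (simp add: card_image[OF inj])
  have sub: "B \<subseteq> enc r m ` Fn (m*r)" unfolding B_def using dl_Fn by blast
  have sp: "enc r m ` Fn (m*r) \<subseteq> V.span B"
  proof
    fix y :: "nat \<Rightarrow> 'a" assume "y \<in> enc r m ` Fn (m*r)"
    then obtain x where x: "x \<in> Fn (m*r)" "y = enc r m x" by auto
    show "y \<in> V.span B" unfolding x(2) enc_expand[OF x(1)]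
      by (intro V.span_sum V.span_scale V.span_base) (auto simp: B_def)
  qed
  have finB: "finite B" by (simp add: B_def)
  have ind: "V.independent B"
  proof (rule V.independent_if_scalars_zero)
    show "finite B" by (simp add: B_def)
  next
    fix f b assume s: "(\<Sum>x\<in>B. vscale (f x) x) = 0" and b: "b \<in> B"
    then obtain q where q: "q < m*r" "b = enc r m (dl q)" by (auto simp: B_def)
    have vals: "b' (P q) = (if b' = b then 1 else 0)" if b'B: "b' \<in> B" for b'
    proof -
      obtain q' where q': "q' < m*r" "b' = enc r m (dl q')" using b'B unfolding B_def by blast
      have "b' (P q) = (if q = q' then 1 else 0)" using enc_dl_pq[OF r q(1) q'(1)] q'(2) by (simp add: P_def)
      moreover have "b (P q) = 1" using enc_dl_pq[OF r q(1) q(1)] q(2) by (simp add: P_def)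
      ultimately show ?thesis using q q' by auto
    qed
    have "0 = (\<Sum>x\<in>B. vscale (f x) x) (P q)" using s by simp
    also have "\<dots> = (\<Sum>b'\<in>B. f b' * (if b' = b then 1 else 0))"
      by (simp add: fun_sum_apply vscale_def vals cong: sum.cong)
    also have "\<dots> = f b" using b finB by (simp add: if_distrib cong: if_cong)
    finally show "f b = 0" by simp
  qed
  show ?thesis unfolding code_dim_def
    by (rule V.dim_unique[OF sub sp ind cardB])
qed

lemma enc_dl0:
  assumes r: "r > 0" and m: "m > 0"
  shows "enc r m (dl 0) p = (if p < r*2^m \<and> odd (p div r) \<and> p mod r = 0 then 1 else (0::'a::field))"
proof (cases "p < r*2^m")
  case False then show ?thesis by (simp add: enc_def)
next
  case True
  have "(\<Sum>j<m. if bit (p div r) j then dl 0 (j*r + p mod r) else (0::'a))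
      = (\<Sum>j<m. if j = 0 then (if odd (p div r) \<and> p mod r = 0 then 1 else 0) else 0)"
  proof (rule sum.cong[OF refl])
    fix j assume "j \<in> {..<m}"
    show "(if bit (p div r) j then dl 0 (j*r + p mod r) else (0::'a)) = (if j = 0 then (if odd (p div r) \<and> p mod r = 0 then 1 else 0) else 0)"
      using r by (cases "j = 0") (auto simp: dl_def bit_0)
  qed
  also have "\<dots> = (if odd (p div r) \<and> p mod r = 0 then 1 else 0)" using m by simp
  finally show ?thesis using True by (simp add: enc_def)
qed

lemma wt_le: "wt n y \<le> n"
proof -
  have "{i. i < n \<and> y i \<noteq> 0} \<subseteq> {..<n}" by auto
  then have "card {i. i < n \<and> y i \<noteq> 0} \<le> card {..<n}" by (intro card_mono) auto
  then show ?thesis by (simp add: wt_def)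
qed

lemma min_dist_enc:
  assumes r: "r > 0" and m: "m > 0"
  shows "min_dist (r*2^m) (enc r m ` Fn (m*r) :: (nat \<Rightarrow> 'a::field) set) = 2^(m-1)"
  unfolding min_dist_def
proof (rule Min_eqI)
  let ?S = "{x \<in> (enc r m ` Fn (m*r) :: (nat \<Rightarrow> 'a::field) set). \<exists>i<r*2^m. x i \<noteq> 0}"
  show "finite (wt (r*2^m) ` ?S)"
    by (rule finite_subset[of _ "{..r*2^m}"]) (auto simp: wt_le)
next
  let ?S = "{x \<in> (enc r m ` Fn (m*r) :: (nat \<Rightarrow> 'a::field) set). \<exists>i<r*2^m. x i \<noteq> 0}"
  fix w assume "w \<in> wt (r*2^m) ` ?S"
  then obtain y where y: "y \<in> ?S" and wy: "w = wt (r*2^m) y" by blast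
  then obtain x where x: "x \<in> Fn (m*r)" and yx: "y = enc r m x" by blast
  have w: "w = wt (r*2^m) (enc r m x)" using wy yx by simp
  have nz: "\<exists>i<r*2^m. enc r m x i \<noteq> 0" using y yx by simp
  have "\<exists>q<m*r. x q \<noteq> 0"
  proof (rule ccontr)
    assume "\<not> ?thesis"
    then have "x = (\<lambda>i. 0)" using x by (auto simp: Fn_def fun_eq_iff not_less)
    then show False using nz by (simp add: enc_zero)
  qed
  then obtain q where q1: "q < m*r" and q2: "x q \<noteq> 0" by blast
  from wt_lower[of r m q x, OF r m q1 q2] show "2^(m-1) \<le> w" by (simp add: w wt_def)
next
  let ?S = "{x \<in> (enc r m ` Fn (m*r) :: (nat \<Rightarrow> 'a::field) set). \<exists>i<r*2^m. x i \<noteq> 0}"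
  have m2: "(2::nat)^m = 2 * 2^(m-1)" by (rule pow2_pred) (use m in simp)
  have d0: "dl 0 \<in> Fn (m*r)" using r m by (intro dl_Fn) simp
  have "1 < (2::nat)^m" using m by (intro one_less_power) auto
  then have "r < r * 2^m" using r by simp
  then have nz: "\<exists>i<r*2^m. (enc r m (dl 0) :: nat \<Rightarrow> 'a) i \<noteq> 0"
    using r m by (intro exI[of _ r]) (simp add: enc_dl0)
  have set: "{p. p < r*2^m \<and> (enc r m (dl 0) :: nat \<Rightarrow> 'a) p \<noteq> 0} = (\<lambda>a. r*(2*a+1)) ` {..<2^(m-1)}"
  proof (rule set_eqI, rule iffI)
    fix p assume "p \<in> {p. p < r*2^m \<and> (enc r m (dl 0) :: nat \<Rightarrow> 'a) p \<noteq> 0}"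
    then have p: "p < r*2^m" "odd (p div r)" "p mod r = 0" using r m by (auto simp: enc_dl0 split: if_splits)
    have "p div r < 2^m" using p(1) by (simp add: less_mult_imp_div_less mult.commute)
    then have a: "p div r div 2 < 2^(m-1)" using m2 by simp
    have "p = r * (2 * (p div r div 2) + 1)" using p(2,3)
      by (metis add.right_neutral div_mult_mod_eq mult.commute odd_two_times_div_two_succ)
    then show "p \<in> (\<lambda>a. r*(2*a+1)) ` {..<2^(m-1)}" using a by blast
  next
    fix p assume "p \<in> (\<lambda>a. r*(2*a+1)) ` {..<2^(m-1)}"
    then obtain a where a: "a < 2^(m-1)" "p = r*(2*a+1)" by auto
    have "2*a+1 < 2^m" using a(1) m2 by simp
    then have "r*(2*a+1) < r*2^m" using r by (intro mult_strict_left_mono) auto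
    then have "p < r*2^m" using a(2) by (simp only:)
    then show "p \<in> {p. p < r*2^m \<and> (enc r m (dl 0) :: nat \<Rightarrow> 'a) p \<noteq> 0}"
      using a r m by (simp add: enc_dl0)
  qed
  have wq: "wt (r*2^m) (enc r m (dl 0) :: nat \<Rightarrow> 'a) = 2^(m-1)"
    unfolding wt_def set using r by (subst card_image) (auto simp: inj_on_def)
  have "(enc r m (dl 0) :: nat \<Rightarrow> 'a) \<in> enc r m ` Fn (m*r)" using d0 by (rule imageI)
  then have eS: "(enc r m (dl 0) :: nat \<Rightarrow> 'a) \<in> ?S" using nz by blast
  show "2^(m-1) \<in> wt (r*2^m) ` ?S" by (rule rev_image_eqI[OF eS]) (use wq in simp)
qed

lemma Fn_add: "x \<in> Fn n \<Longrightarrow> y \<in> Fn n \<Longrightarrow> (\<lambda>i. x i + y i) \<in> Fn n"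
  by (simp add: Fn_def)
lemma Fn_scale: "x \<in> Fn n \<Longrightarrow> vscale c x \<in> Fn n"
  by (simp add: Fn_def vscale_def)

lemma linear_code_enc: "linear_code (r*2^m) (enc r m ` Fn K :: (nat \<Rightarrow> 'a::field) set)"
  unfolding linear_code_def
proof (intro conjI ballI allI)
  show "enc r m ` Fn K \<subseteq> Fn (r*2^m)" using enc_Fn by blast
  show "(\<lambda>i. 0::'a) \<in> enc r m ` Fn K"
    by (rule image_eqI[of _ _ "\<lambda>i. 0"]) (auto simp: enc_zero Fn_def)
next
  fix x y :: "nat \<Rightarrow> 'a" assume "x \<in> enc r m ` Fn K" "y \<in> enc r m ` Fn K"
  then obtain a b where "a \<in> Fn K" "b \<in> Fn K" "x = enc r m a" "y = enc r m b" by auto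
  then show "(\<lambda>i. x i + y i) \<in> enc r m ` Fn K"
    by (intro image_eqI[of _ _ "\<lambda>i. a i + b i"]) (auto simp: enc_add Fn_add)
next
  fix c and x :: "nat \<Rightarrow> 'a" assume "x \<in> enc r m ` Fn K"
  then obtain a where "a \<in> Fn K" "x = enc r m a" by auto
  then show "vscale c x \<in> enc r m ` Fn K"
    by (intro image_eqI[of _ _ "vscale c a"]) (auto simp: enc_scale Fn_scale)
qed

theorem theorem1p1:
  shows "\<exists>(n :: nat \<Rightarrow> nat) (C :: nat \<Rightarrow> (nat \<Rightarrow> 'a::field) set).
    \<forall>i\<ge>1. linear_code (n i) (C i) \<and>
      real (code_dim (C i)) * real (min_dist (n i) (C i)) / real (n i) = 2 * real i \<and>
      2 * real i > sqrt (real (code_dim (C i))) - 1 \<and>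
      sqrt (real (code_dim (C i))) - 1 > 2 * real i - 1"
proof (intro exI allI impI)
  fix i :: nat assume i: "1 \<le> i"
  let ?n = "\<lambda>i. (i+1) * 2^(4*i)"
  let ?C = "\<lambda>i. (enc (i+1) (4*i) ` Fn (4*i*(i+1)) :: (nat \<Rightarrow> 'a) set)"
  have r: "i + 1 > 0" and m: "4*i > 0" using i by auto
  have lc: "linear_code (?n i) (?C i)" by (rule linear_code_enc)
  have cd: "code_dim (?C i) = 4*i*(i+1)" by (rule code_dim_enc[OF r])
  have md: "min_dist (?n i) (?C i) = 2^(4*i-1)" by (rule min_dist_enc[OF r m])
  have p2: "(2::nat)^(4*i) = 2 * 2^(4*i-1)" by (rule pow2_pred) (use m in simp)
  have k: "real (code_dim (?C i)) = 4 * real i * (real i + 1)" using cd by (simp add: algebra_simps)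
  define P :: nat where "P = 2^(4*i-1)"
  have Ppos: "real P > 0" by (simp add: P_def)
  have nP: "real (?n i) = (real i + 1) * (2 * real P)"
  proof -
    have "?n i = (i+1) * (2*P)" using p2 by (simp add: P_def)
    then show ?thesis by (simp only: of_nat_mult of_nat_add of_nat_1 of_nat_numeral)
  qed
  have mdP: "real (min_dist (?n i) (?C i)) = real P" using md by (simp add: P_def)
  have "real (code_dim (?C i)) * real (min_dist (?n i) (?C i)) / real (?n i)
      = 4 * real i * (real i + 1) * real P / ((real i + 1) * (2 * real P))"
    unfolding k mdP nP ..
  also have "\<dots> = 2 * real i"
  proof -
    have "0 < (real i + 1) * (2 * real P)" using Ppos by (intro mult_pos_pos) auto
    then have den: "(real i + 1) * (2 * real P) \<noteq> 0" by (metis order_less_irrefl)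
    show ?thesis unfolding divide_eq_eq using den by (simp add: algebra_simps)
  qed
  finally have rat: "real (code_dim (?C i)) * real (min_dist (?n i) (?C i)) / real (?n i) = 2 * real i" .
  have lo: "2 * real i < sqrt (real (code_dim (?C i)))"
    unfolding k using i by (intro real_less_rsqrt) (simp add: power2_eq_square algebra_simps)
  have "sqrt (real (code_dim (?C i))) < sqrt ((2 * real i + 1)^2)"
    unfolding k using i by (intro real_sqrt_less_mono) (simp add: power2_eq_square algebra_simps)
  also have "\<dots> = 2 * real i + 1" by simp
  finally have hi: "sqrt (real (code_dim (?C i))) < 2 * real i + 1" .
  show "linear_code (?n i) (?C i) \<and>
      real (code_dim (?C i)) * real (min_dist (?n i) (?C i)) / real (?n i) = 2 * real i \<and>
      2 * real i > sqrt (real (code_dim (?C i))) - 1 \<and>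
      sqrt (real (code_dim (?C i))) - 1 > 2 * real i - 1"
    using lc rat lo hi by linarith
qed

end
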